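(* Let $G$ be a connected non-regular graph with $n$ vertices, $m$ edges, maximum degree $\Delta$ and minimum degree $\delta$, and put $D=(\Delta-\delta)^2$. Then (i) if $n\le\frac{4m(\sqrt{1+D}-1)}{D}$, $$QE(G)\ <\ \frac{2m}{n}+\sqrt{(n-1)\Big[2m+\frac n4D-\Big(\frac{2m}{n}\Big)^2\Big]};$$ (ii) if $n>\frac{4m(\sqrt{1+D}-1)}{D}$, $$QE(G)\ <\ \sqrt{\frac{2m}{n}+\frac14D}+\sqrt{(n-1)\Big(2m+\frac{n-1}{4}D-\frac{2m}{n}\Big)}.$$
   Context: All graphs are finite, simple and undirected. For a graph $G$ with $n$ vertices and $m$ edges, let $q_1\ge\cdots\ge q_n\ge0$ be the eigenvalues of the signless Laplacian $Q(G)=D(G)+A(G)$ (degree diagonal matrix plus adjacency matrix). The signless Laplacian energy is $QE(G)=\sum_{i=1}^n|q_i-\frac{2m}{n}|$. *)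

theory Defs
  imports "Jordan_Normal_Form.Jordan_Normal_Form"
begin

text \<open>Simple graphs on the vertex set {0..<n}, given by an adjacency relation E
  (assumed symmetric and irreflexive in the theorem).\<close>

definition degree :: "nat \<Rightarrow> (nat \<Rightarrow> nat \<Rightarrow> bool) \<Rightarrow> nat \<Rightarrow> nat" where
  "degree n E i = card {j. j < n \<and> E i j}"

definition num_edges :: "nat \<Rightarrow> (nat \<Rightarrow> nat \<Rightarrow> bool) \<Rightarrow> nat" where
  "num_edges n E = card {(i, j). i < j \<and> j < n \<and> E i j}"

definition max_degree :: "nat \<Rightarrow> (nat \<Rightarrow> nat \<Rightarrow> bool) \<Rightarrow> nat" where
  "max_degree n E = Max (degree n E ` {0..<n})"

definition min_degree :: "nat \<Rightarrow> (nat \<Rightarrow> nat \<Rightarrow> bool) \<Rightarrow> nat" where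
  "min_degree n E = Min (degree n E ` {0..<n})"

definition graph_connected :: "nat \<Rightarrow> (nat \<Rightarrow> nat \<Rightarrow> bool) \<Rightarrow> bool" where
  "graph_connected n E \<longleftrightarrow>
     (\<forall>i<n. \<forall>j<n. (\<lambda>x y. x < n \<and> y < n \<and> E x y)\<^sup>*\<^sup>* i j)"

definition regular_graph :: "nat \<Rightarrow> (nat \<Rightarrow> nat \<Rightarrow> bool) \<Rightarrow> bool" where
  "regular_graph n E \<longleftrightarrow> (\<forall>i<n. \<forall>j<n. degree n E i = degree n E j)"

definition signless_laplacian :: "nat \<Rightarrow> (nat \<Rightarrow> nat \<Rightarrow> bool) \<Rightarrow> real mat" where
  "signless_laplacian n E = mat n n (\<lambda>(i, j).
     if i = j then real (degree n E i) else if E i j then 1 else 0)"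

text \<open>es is the list of eigenvalues (with multiplicities) of the matrix A.\<close>
definition is_eigenvalue_list :: "real mat \<Rightarrow> real list \<Rightarrow> bool" where
  "is_eigenvalue_list A es \<longleftrightarrow> char_poly A = (\<Prod>q\<leftarrow>es. [:- q, 1:])"

definition QE :: "nat \<Rightarrow> (nat \<Rightarrow> nat \<Rightarrow> bool) \<Rightarrow> real list \<Rightarrow> real" where
  "QE n E es = (\<Sum>q\<leftarrow>es. \<bar>q - 2 * real (num_edges n E) / real n\<bar>)"

end

theory Submission
  imports Defs "Jordan_Normal_Form.Schur_Decomposition" "HOL-Analysis.Analysis"
begin




lemma handshake:
  assumes sym: "\<And>i j. E i j \<Longrightarrow> E j i" and irrefl: "\<And>i. \<not> E i i"
  shows "(\<Sum>i<n. degree n E i) = 2 * num_edges n E"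
proof -
  define Ord where "Ord = {(i,j). i<n \<and> j<n \<and> E i j}"
  define L where "L = {(i, j). i < j \<and> j < n \<and> E i j}"
  define R where "R = {(i, j). j < i \<and> i < n \<and> E i j}"
  have fin: "finite Ord" unfolding Ord_def
    by (rule finite_subset[of _ "{..<n} \<times> {..<n}"]) auto
  have "(\<Sum>i<n. degree n E i) = (\<Sum>i<n. card {j. j<n \<and> E i j})" by (simp add: degree_def)
  also have "\<dots> = card (SIGMA i:{..<n}. {j. j<n \<and> E i j})"
    by (rule card_SigmaI[symmetric]) auto
  also have "(SIGMA i:{..<n}. {j. j<n \<and> E i j}) = Ord" unfolding Ord_def by auto
  also have "Ord = L \<union> R" unfolding Ord_def L_def R_def using irrefl
    by (auto, metis linorder_neqE_nat)
  also have "card (L \<union> R) = card L + card R"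
    by (rule card_Un_disjoint) (use fin \<open>Ord = L \<union> R\<close> in \<open>auto simp: L_def R_def\<close>)
  also have "R = prod.swap ` L" unfolding R_def L_def using sym by (auto simp: image_iff)
  also have "card (prod.swap ` L) = card L" by (rule card_image) simp
  finally show ?thesis by (simp add: num_edges_def L_def)
qed

lemma sum_indicator_card:
  "(\<Sum>j<n. if E i j then 1 else 0 :: real) = real (degree n E i)"
proof -
  have "(\<Sum>j<n. if E i j then 1 else 0 :: real) = (\<Sum>j\<in>{j\<in>{..<n}. E i j}. 1)"
    by (simp add: sum.If_cases Int_def)
  also have "{j\<in>{..<n}. E i j} = {j. j<n \<and> E i j}" by auto
  finally show ?thesis by (simp add: degree_def)
qed

definition qf :: "nat \<Rightarrow> (nat \<Rightarrow> nat \<Rightarrow> real) \<Rightarrow> (nat \<Rightarrow> real) \<Rightarrow> real" where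
  "qf n a y = (\<Sum>i<n. \<Sum>j<n. a i j * y i * y j)"
definition nsq :: "nat \<Rightarrow> (nat \<Rightarrow> real) \<Rightarrow> real" where
  "nsq n y = (\<Sum>i<n. (y i)\<^sup>2)"

lemma lin_quad_zero:
  fixes c b :: real
  assumes "\<And>t. 2 * t * c + t\<^sup>2 * b \<le> 0"
  shows "c = 0"
proof (rule ccontr)
  assume c: "c \<noteq> 0"
  define t where "t = c / (\<bar>b\<bar> + 1)"
  have pos: "\<bar>b\<bar> + 1 > 0" by simp
  have ts: "t * (\<bar>b\<bar> + 1) = c" unfolding t_def using pos by simp
  have "2 * t * c + t\<^sup>2 * b \<le> 0" by (rule assms)
  hence "(2 * t * c + t\<^sup>2 * b) * (\<bar>b\<bar> + 1)^2 \<le> 0"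
    by (simp add: mult_nonpos_nonneg)
  also have "(2 * t * c + t\<^sup>2 * b) * (\<bar>b\<bar> + 1)^2
     = 2 * (t * (\<bar>b\<bar> + 1)) * c * (\<bar>b\<bar> + 1) + (t * (\<bar>b\<bar> + 1))\<^sup>2 * b"
    by (simp add: algebra_simps power2_eq_square)
  also have "\<dots> = c\<^sup>2 * (2 * \<bar>b\<bar> + 2 + b)"
    unfolding ts by (simp add: algebra_simps power2_eq_square)
  finally have "c\<^sup>2 * (2 * \<bar>b\<bar> + 2 + b) \<le> 0" .
  moreover have "c\<^sup>2 > 0" using c by simp
  moreover have "2 * \<bar>b\<bar> + 2 + b > 0" by (simp add: abs_if)
  ultimately show False by (simp add: mult_le_0_iff)
qed

lemma lagrange:
  assumes sym: "\<And>i j. a i j = a j i"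
    and le: "\<And>y. qf n a y \<le> l * nsq n y"
    and eq: "qf n a w = l * nsq n w" and k: "k < n"
  shows "(\<Sum>j<n. a k j * w j) = l * w k"
proof -
  define r where "r = (\<Sum>j<n. a k j * w j)"
  have key: "2 * t * (r - l * w k) + t\<^sup>2 * (a k k - l) \<le> 0" for t
  proof -
    define y where "y = (\<lambda>i. w i + t * (if i = k then 1 else 0))"
    have e1: "a i j * y i * y j = a i j * w i * w j + (if i = k then t * (a k j * w j) else 0)
       + (if j = k then t * (a i k * w i) else 0) + (if i = k \<and> j = k then t\<^sup>2 * a k k else 0)" for i j
      by (auto simp: y_def algebra_simps power2_eq_square)
    have "qf n a y = qf n a w + (\<Sum>i<n. \<Sum>j<n. if i = k then t * (a k j * w j) else 0)
       + (\<Sum>i<n. \<Sum>j<n. if j = k then t * (a i k * w i) else 0)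
       + (\<Sum>i<n. \<Sum>j<n. if i = k \<and> j = k then t\<^sup>2 * a k k else 0)"
      unfolding qf_def e1 by (simp only: sum.distrib)
    also have "(\<Sum>i<n. \<Sum>j<n. if i = k then t * (a k j * w j) else 0) = (\<Sum>i<n. if i = k then t * r else 0)"
      by (rule sum.cong) (auto simp: r_def sum_distrib_left)
    also have "\<dots> = t * r" using k by simp
    also have "(\<Sum>i<n. \<Sum>j<n. if j = k then t * (a i k * w i) else 0) = (\<Sum>i<n. t * (a k i * w i))"
      by (rule sum.cong) (use k in \<open>auto simp: sym\<close>)
    also have "\<dots> = t * r" by (simp add: r_def sum_distrib_left)
    also have "(\<Sum>i<n. \<Sum>j<n. if i = k \<and> j = k then t\<^sup>2 * a k k else 0) = (\<Sum>i<n. if i = k then t\<^sup>2 * a k k else 0)"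
      by (rule sum.cong) (use k in auto)
    also have "\<dots> = t\<^sup>2 * a k k" using k by simp
    finally have q: "qf n a y = qf n a w + 2 * t * r + t\<^sup>2 * a k k" by simp
    have e2: "(y i)\<^sup>2 = (w i)\<^sup>2 + (if i = k then 2 * t * w k else 0) + (if i = k then t\<^sup>2 else 0)" for i
      by (auto simp: y_def power2_eq_square algebra_simps)
    have ns: "nsq n y = nsq n w + 2 * t * w k + t\<^sup>2"
      unfolding nsq_def e2 using k by (simp add: sum.distrib)
    have "qf n a y \<le> l * nsq n y" by (rule le)
    thus ?thesis unfolding q ns using eq by (simp add: algebra_simps)
  qed
  from lin_quad_zero[OF key] show ?thesis by (simp add: r_def)
qed

lemma rayleigh_exists:
  assumes n: "n > 0"
  shows "\<exists>w. nsq n w = 1 \<and> (\<forall>y. qf n a y \<le> qf n a w * nsq n y)"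
proof -
  define S where "S = (\<lambda>i::nat. if i < n then {-1..1::real} else {0})"
  define Sph where "Sph = Pi\<^sub>E UNIV S \<inter> {y. nsq n y = 1}"
  have c1: "compact (Pi\<^sub>E UNIV S)"
  proof -
    have "compactin (product_topology (\<lambda>i. euclidean) UNIV) (Pi\<^sub>E UNIV S)"
      by (subst compactin_PiE) (auto simp: S_def)
    thus ?thesis by (simp add: euclidean_product_topology)
  qed
  have contn: "continuous_on UNIV (nsq n)"
    unfolding nsq_def by (intro continuous_intros) auto
  have contq: "continuous_on UNIV (qf n a)"
    unfolding qf_def by (intro continuous_intros) auto
  have c2: "closed {y. nsq n y = 1}"
    by (rule closed_Collect_eq[OF contn]) simp
  have comp: "compact Sph" unfolding Sph_def by (rule compact_Int_closed[OF c1 c2])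
  define e0 where "e0 = (\<lambda>i::nat. if i = 0 then 1 else 0::real)"
  have "nsq n e0 = (\<Sum>i<n. if i = 0 then 1 else 0)"
    unfolding nsq_def by (rule sum.cong) (auto simp: e0_def)
  also have "\<dots> = 1" using n by simp
  finally have "e0 \<in> Sph" using n
    by (auto simp: Sph_def e0_def S_def PiE_iff)
  hence ne: "Sph \<noteq> {}" by auto
  obtain w where w: "w \<in> Sph" and wmax: "\<And>z. z \<in> Sph \<Longrightarrow> qf n a z \<le> qf n a w"
    using continuous_attains_sup[OF comp ne continuous_on_subset[OF contq]] by auto
  have nw: "nsq n w = 1" using w by (simp add: Sph_def)
  have "qf n a y \<le> qf n a w * nsq n y" for y
  proof (cases "nsq n y = 0")
    case True
    have "\<forall>i\<in>{..<n}. (y i)\<^sup>2 = 0"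
      using True unfolding nsq_def by (subst sum_nonneg_eq_0_iff[symmetric]) auto
    hence "\<forall>i<n. y i = 0" by auto
    hence "qf n a y = 0" unfolding qf_def by simp
    thus ?thesis using True by simp
  next
    case False
    define s where "s = nsq n y"
    have s: "s > 0" using False unfolding s_def nsq_def
      by (metis (no_types, lifting) nsq_def order_less_le sum_nonneg zero_le_power2)
    define z where "z = (\<lambda>i. if i < n then y i / sqrt s else 0)"
    have yi: "(y i)\<^sup>2 \<le> s" if "i < n" for i
    proof -
      have "(y i)\<^sup>2 = (\<Sum>j\<in>{i}. (y j)\<^sup>2)" by simp
      also have "\<dots> \<le> (\<Sum>j<n. (y j)\<^sup>2)" by (rule sum_mono2) (use that in auto)
      finally show ?thesis by (simp add: s_def nsq_def)
    qed
    have nz: "nsq n z = 1"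
    proof -
      have "nsq n z = (\<Sum>i<n. (y i)\<^sup>2 / s)"
        unfolding nsq_def z_def using s by (simp add: power_divide)
      also have "\<dots> = 1" using s by (simp add: sum_divide_distrib[symmetric] s_def nsq_def)
      finally show ?thesis .
    qed
    have "z \<in> Sph"
    proof -
      have "\<bar>z i\<bar> \<le> 1" if "i < n" for i
      proof -
        have "(z i)\<^sup>2 = (y i)\<^sup>2 / s" using that s by (simp add: z_def power_divide)
        also have "\<dots> \<le> 1" using yi[OF that] s by simp
        finally show ?thesis using power2_le_imp_le[of "\<bar>z i\<bar>" 1] by simp
      qed
      hence zb: "z i \<in> {-1..1}" if "i < n" for i using that by (auto simp: abs_le_iff)
      have z0: "z i = 0" if "\<not> i < n" for i using that by (simp add: z_def)
      show ?thesis using nz zb z0 by (auto simp: Sph_def S_def PiE_iff)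
    qed
    hence "qf n a z \<le> qf n a w" by (rule wmax)
    moreover have "qf n a z = qf n a y / s"
      unfolding qf_def z_def using s
      by (simp add: sum_divide_distrib field_simps)
    ultimately show ?thesis using s by (simp add: s_def divide_le_eq)
  qed
  thus ?thesis using nw by blast
qed



definition tr :: "real mat \<Rightarrow> real" where
  "tr M = (\<Sum>i<dim_row M. M $$ (i,i))"

lemma sim_mult:
  fixes A :: "real mat"
  assumes s1: "similar_mat_wit A B P Q" and s2: "similar_mat_wit A' B' P Q"
    and d: "dim_row A' = dim_row A"
  shows "similar_mat_wit (A * A') (B * B') P Q"
proof -
  define n where "n = dim_row A"
  note m1 = similar_mat_witD[OF n_def s1]
  have n': "n = dim_row A'" using d n_def by simp
  note m2 = similar_mat_witD[OF n' s2]
  have QPX: "Q * (P * X) = X" if "X \<in> carrier_mat n nc" for X nc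
  proof -
    have "(Q * P) * X = Q * (P * X)" by (rule assoc_mult_mat) (use m1 that in auto)
    hence "Q * (P * X) = (Q * P) * X" by simp
    also have "\<dots> = X" using m1 that by simp
    finally show ?thesis .
  qed
  have cB: "B \<in> carrier_mat n n" "B' \<in> carrier_mat n n" "P \<in> carrier_mat n n" "Q \<in> carrier_mat n n"
    using m1 m2 by auto
  have W: "P * (B' * Q) \<in> carrier_mat n n" using cB by auto
  have "A * A' = (P * (B * Q)) * (P * (B' * Q))" using m1 m2 cB by (simp add: assoc_mult_mat)
  also have "\<dots> = P * ((B * Q) * (P * (B' * Q)))" by (rule assoc_mult_mat) (use cB W in auto)
  also have "(B * Q) * (P * (B' * Q)) = B * (Q * (P * (B' * Q)))" by (rule assoc_mult_mat) (use cB W in auto)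
  also have "Q * (P * (B' * Q)) = B' * Q" using cB by (intro QPX) auto
  also have "B * (B' * Q) = (B * B') * Q" by (rule assoc_mult_mat[symmetric]) (use cB in auto)
  also have "P * ((B * B') * Q) = P * (B * B') * Q" by (rule assoc_mult_mat[symmetric]) (use cB in auto)
  finally show ?thesis using m1 m2
    by (intro similar_mat_witI[of P Q n]) auto
qed

lemma sim_minus:
  fixes A :: "real mat"
  assumes s1: "similar_mat_wit A B P Q" and s2: "similar_mat_wit A' B' P Q"
    and d: "dim_row A' = dim_row A"
  shows "similar_mat_wit (A - A') (B - B') P Q"
proof -
  define n where "n = dim_row A"
  note m1 = similar_mat_witD[OF n_def s1]
  have n': "n = dim_row A'" using d n_def by simp
  note m2 = similar_mat_witD[OF n' s2]
  have "P * (B - B') * Q = (P * B - P * B') * Q" using m1 m2 by (simp add: mult_minus_distrib_mat)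
  also have "\<dots> = P * B * Q - P * B' * Q" using m1 m2
    by (intro minus_mult_distrib_mat) auto
  finally show ?thesis using m1 m2
    by (intro similar_mat_witI[of P Q n]) (auto simp: minus_carrier_mat)
qed

lemma sim_one:
  fixes A :: "real mat"
  assumes s1: "similar_mat_wit A B P Q"
  shows "similar_mat_wit (1\<^sub>m (dim_row A)) (1\<^sub>m (dim_row A)) P Q"
proof -
  define n where "n = dim_row A"
  note m1 = similar_mat_witD[OF n_def s1]
  show ?thesis unfolding n_def[symmetric] using m1 by (intro similar_mat_witI[of P Q n]) auto
qed

lemma tr_mult_comm:
  assumes A: "A \<in> carrier_mat n n" and B: "B \<in> carrier_mat n n"
  shows "tr (A * B) = tr (B * A)"
proof -
  have "tr (A * B) = (\<Sum>i<n. \<Sum>k<n. A $$ (i,k) * B $$ (k,i))"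
    unfolding tr_def using A B
    by (auto simp: scalar_prod_def row_def col_def lessThan_atLeast0 intro!: sum.cong)
  also have "\<dots> = (\<Sum>k<n. \<Sum>i<n. B $$ (k,i) * A $$ (i,k))"
    by (subst sum.swap) (simp add: mult.commute)
  also have "\<dots> = tr (B * A)"
    unfolding tr_def using A B
    by (auto simp: scalar_prod_def row_def col_def lessThan_atLeast0 intro!: sum.cong)
  finally show ?thesis .
qed

lemma tr_sim:
  assumes s: "similar_mat_wit A B P Q"
  shows "tr A = tr B"
proof -
  define n where "n = dim_row A"
  note m = similar_mat_witD[OF n_def s]
  have "tr A = tr ((P * B) * Q)" using m by simp
  also have "\<dots> = tr (Q * (P * B))" using m by (intro tr_mult_comm) auto
  also have "(Q * P) * B = Q * (P * B)" by (rule assoc_mult_mat) (use m in auto)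
  hence "Q * (P * B) = (Q * P) * B" by simp
  also have "\<dots> = B" using m by simp
  finally show ?thesis .
qed

lemma ut_mult_diag:
  fixes U V :: "real mat"
  assumes U: "U \<in> carrier_mat n n" and V: "V \<in> carrier_mat n n"
    and uU: "upper_triangular U" and uV: "upper_triangular V" and i: "i < n"
  shows "(U * V) $$ (i,i) = U $$ (i,i) * V $$ (i,i)"
proof -
  have "(U * V) $$ (i,i) = (\<Sum>k\<in>{0..<n}. U $$ (i,k) * V $$ (k,i))"
    using U V i by (simp add: scalar_prod_def row_def col_def)
  also have "\<dots> = (\<Sum>k\<in>{0..<n}. if k = i then U $$ (i,i) * V $$ (i,i) else 0)"
  proof (rule sum.cong)
    fix k assume k: "k \<in> {0..<n}"
    show "U $$ (i,k) * V $$ (k,i) = (if k = i then U $$ (i,i) * V $$ (i,i) else 0)"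
    proof (cases "k < i")
      case True thus ?thesis using upper_triangularD[OF uU, of k i] U i by simp
    next
      case False
      show ?thesis
      proof (cases "k = i")
        case False
        hence "i < k" using \<open>\<not> k < i\<close> by simp
        thus ?thesis using upper_triangularD[OF uV, of i k] V k False by simp
      qed simp
    qed
  qed simp
  also have "\<dots> = U $$ (i,i) * V $$ (i,i)" using i by simp
  finally show ?thesis .
qed

lemma ut_mult:
  fixes U V :: "real mat"
  assumes U: "U \<in> carrier_mat n n" and V: "V \<in> carrier_mat n n"
    and uU: "upper_triangular U" and uV: "upper_triangular V"
  shows "upper_triangular (U * V)"
  unfolding upper_triangular_def
proof (intro allI impI)
  fix i j assume i: "i < dim_row (U * V)" and ji: "j < i"
  have i': "i < n" using i U by simp
  have "(U * V) $$ (i,j) = (\<Sum>k\<in>{0..<n}. U $$ (i,k) * V $$ (k,j))"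
    using U V i' ji by (simp add: scalar_prod_def row_def col_def)
  also have "\<dots> = 0"
  proof (rule sum.neutral, intro ballI)
    fix k assume k: "k \<in> {0..<n}"
    show "U $$ (i,k) * V $$ (k,j) = 0"
    proof (cases "k < i")
      case True thus ?thesis using upper_triangularD[OF uU, of k i] U i' by simp
    next
      case False thus ?thesis using upper_triangularD[OF uV, of j k] V k ji by simp
    qed
  qed
  finally show "(U * V) $$ (i,j) = 0" .
qed

lemma ut_minus_id:
  fixes U :: "real mat"
  assumes U: "U \<in> carrier_mat n n" and uU: "upper_triangular U"
  shows "upper_triangular (U - c \<cdot>\<^sub>m 1\<^sub>m n)"
  using assms unfolding upper_triangular_def by auto

lemma tr_ut_sq:
  fixes U :: "real mat"
  assumes U: "U \<in> carrier_mat n n" and uU: "upper_triangular U"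
  shows "tr (U * U) = (\<Sum>i<n. (U $$ (i,i))\<^sup>2)"
  unfolding tr_def using U ut_mult_diag[OF U U uU uU]
  by (auto simp: power2_eq_square intro!: sum.cong)

lemma spec_sums:
  fixes A :: "real mat"
  assumes A: "A \<in> carrier_mat n n" and cp: "char_poly A = (\<Prod>q\<leftarrow>es. [:- q, 1:])"
  shows "length es = n"
    "tr ((A - c \<cdot>\<^sub>m 1\<^sub>m n) * (A - c \<cdot>\<^sub>m 1\<^sub>m n)) = (\<Sum>i<n. (es!i - c)\<^sup>2)"
    "tr (((A - c \<cdot>\<^sub>m 1\<^sub>m n) * (A - c \<cdot>\<^sub>m 1\<^sub>m n) - t \<cdot>\<^sub>m 1\<^sub>m n)
        * ((A - c \<cdot>\<^sub>m 1\<^sub>m n) * (A - c \<cdot>\<^sub>m 1\<^sub>m n) - t \<cdot>\<^sub>m 1\<^sub>m n))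
      = (\<Sum>i<n. ((es!i - c)\<^sup>2 - t)\<^sup>2)"
proof -
  obtain T P Q where sd: "schur_decomposition A es = (T, P, Q)"
    by (cases "schur_decomposition A es") auto
  from schur_decomposition[OF A cp sd]
  have s: "similar_mat_wit A T P Q" and uT: "upper_triangular T" and dT: "diag_mat T = es" by auto
  note m = similar_mat_witD2[OF A s]
  have dA: "dim_row A = n" using A by simp
  have "es = diag_mat T" using dT by simp
  then show len: "length es = n" using m by (simp add: diag_mat_def)
  have Tii: "T $$ (i,i) = es ! i" if "i < n" for i
    using dT that m by (auto simp: diag_mat_def)
  have s1: "similar_mat_wit (1\<^sub>m n) (1\<^sub>m n) P Q" using sim_one[OF s] dA by simp
  have sc: "similar_mat_wit (A - c \<cdot>\<^sub>m 1\<^sub>m n) (T - c \<cdot>\<^sub>m 1\<^sub>m n) P Q"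
    by (rule sim_minus[OF s similar_mat_wit_smult[OF s1]]) (simp add: dA)
  define U where "U = T - c \<cdot>\<^sub>m 1\<^sub>m n"
  have U: "U \<in> carrier_mat n n" unfolding U_def using m by (auto simp: minus_carrier_mat)
  have uU: "upper_triangular U" unfolding U_def by (rule ut_minus_id[OF m(5) uT])
  have Uii: "U $$ (i,i) = es ! i - c" if "i < n" for i
    unfolding U_def using that m Tii by simp
  have sq: "similar_mat_wit ((A - c \<cdot>\<^sub>m 1\<^sub>m n) * (A - c \<cdot>\<^sub>m 1\<^sub>m n)) (U * U) P Q"
    unfolding U_def by (rule sim_mult[OF sc sc]) simp
  show "tr ((A - c \<cdot>\<^sub>m 1\<^sub>m n) * (A - c \<cdot>\<^sub>m 1\<^sub>m n)) = (\<Sum>i<n. (es!i - c)\<^sup>2)"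
    unfolding tr_sim[OF sq] tr_ut_sq[OF U uU] using Uii by simp
  define V where "V = U * U - t \<cdot>\<^sub>m 1\<^sub>m n"
  have UU: "U * U \<in> carrier_mat n n" using U by simp
  have V: "V \<in> carrier_mat n n" unfolding V_def using UU by (auto simp: minus_carrier_mat)
  have uV: "upper_triangular V" unfolding V_def by (rule ut_minus_id[OF UU ut_mult[OF U U uU uU]])
  have Vii: "V $$ (i,i) = (es ! i - c)\<^sup>2 - t" if "i < n" for i
    unfolding V_def using that U UU ut_mult_diag[OF U U uU uU that] Uii[OF that]
    by (simp add: power2_eq_square)
  have sv: "similar_mat_wit ((A - c \<cdot>\<^sub>m 1\<^sub>m n) * (A - c \<cdot>\<^sub>m 1\<^sub>m n) - t \<cdot>\<^sub>m 1\<^sub>m n) V P Q"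
    unfolding V_def by (rule sim_minus[OF sq similar_mat_wit_smult[OF s1]]) (simp add: dA)
  have sv2: "similar_mat_wit (((A - c \<cdot>\<^sub>m 1\<^sub>m n) * (A - c \<cdot>\<^sub>m 1\<^sub>m n) - t \<cdot>\<^sub>m 1\<^sub>m n)
        * ((A - c \<cdot>\<^sub>m 1\<^sub>m n) * (A - c \<cdot>\<^sub>m 1\<^sub>m n) - t \<cdot>\<^sub>m 1\<^sub>m n)) (V * V) P Q"
    by (rule sim_mult[OF sv sv]) simp
  show "tr (((A - c \<cdot>\<^sub>m 1\<^sub>m n) * (A - c \<cdot>\<^sub>m 1\<^sub>m n) - t \<cdot>\<^sub>m 1\<^sub>m n)
        * ((A - c \<cdot>\<^sub>m 1\<^sub>m n) * (A - c \<cdot>\<^sub>m 1\<^sub>m n) - t \<cdot>\<^sub>m 1\<^sub>m n))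
      = (\<Sum>i<n. ((es!i - c)\<^sup>2 - t)\<^sup>2)"
    unfolding tr_sim[OF sv2] tr_ut_sq[OF V uV] using Vii by simp
qed

lemma tr_sym_sq:
  fixes M :: "real mat"
  assumes M: "M \<in> carrier_mat n n" and sy: "\<And>i j. i < n \<Longrightarrow> j < n \<Longrightarrow> M $$ (i,j) = M $$ (j,i)"
  shows "tr (M * M) = (\<Sum>i<n. \<Sum>j<n. (M $$ (i,j))\<^sup>2)"
  unfolding tr_def using M sy
  by (auto simp: scalar_prod_def row_def col_def lessThan_atLeast0 power2_eq_square intro!: sum.cong)



lemma final_i:
  fixes N u x T :: real
  assumes N: "N \<ge> 2" and u: "u \<ge> 0" and ux: "u < x" and xT: "x\<^sup>2 \<le> T" and Tu: "T \<le> N * u\<^sup>2"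
  shows "x + sqrt ((N - 1) * (T - x\<^sup>2)) < u + sqrt ((N - 1) * (T - u\<^sup>2))"
proof -
  define r where "r = sqrt (N - 1)"
  define a where "a = sqrt (T - u\<^sup>2)"
  define b where "b = sqrt (T - x\<^sup>2)"
  have r1: "r \<ge> 1" unfolding r_def using N by simp
  have ux2: "u\<^sup>2 < x\<^sup>2" using u ux by (simp add: power_strict_mono)
  have b0: "b \<ge> 0" unfolding b_def using xT by simp
  have ba: "b < a" unfolding a_def b_def using ux2 by simp
  have a2: "a\<^sup>2 = T - u\<^sup>2" unfolding a_def using xT ux2 by simp
  have b2: "b\<^sup>2 = T - x\<^sup>2" unfolding b_def using xT by simp
  have r2: "r\<^sup>2 = N - 1" unfolding r_def using N by simp
  have "a\<^sup>2 \<le> (N - 1) * u\<^sup>2" using a2 Tu by (simp add: algebra_simps)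
  hence "a\<^sup>2 \<le> (r * u)\<^sup>2" using r2 by (simp add: power_mult_distrib)
  moreover have ru0: "0 \<le> r * u" using u r1 by simp
  ultimately have aru: "a \<le> r * u" by (rule power2_le_imp_le)
  have abr: "a + b < r * (x + u)"
  proof -
    have "a + b < a + a" using ba by simp
    also have "\<dots> \<le> 2 * r * u" using aru by simp
    also have "\<dots> < r * (x + u)" using r1 ux by (simp add: algebra_simps)
    finally show ?thesis .
  qed
  have d: "a * a - b * b = x * x - u * u" using a2 b2 by (simp add: power2_eq_square)
  have "r * (a - b) * (a + b) = r * (a * a - b * b)" by (simp add: algebra_simps)
  also have "\<dots> = r * (x * x - u * u)" using d by simp
  also have "\<dots> = (x - u) * (r * (x + u))" by (simp add: algebra_simps)
  finally have e: "r * (a - b) * (a + b) = (x - u) * (r * (x + u))" .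
  have xu: "x - u > 0" using ux by simp
  have "a + b > 0" using ba b0 by simp
  have "(x - u) * (a + b) < (x - u) * (r * (x + u))"
    by (rule mult_strict_left_mono[OF abr xu])
  hence "r * (a - b) * (a + b) > (x - u) * (a + b)" unfolding e .
  hence "r * (a - b) > x - u" using \<open>a + b > 0\<close> by simp
  moreover have "sqrt ((N - 1) * (T - x\<^sup>2)) = r * b" unfolding r_def b_def by (simp add: real_sqrt_mult)
  moreover have "sqrt ((N - 1) * (T - u\<^sup>2)) = r * a" unfolding r_def a_def by (simp add: real_sqrt_mult)
  ultimately show ?thesis by (simp add: algebra_simps)
qed

lemma cond_i:
  fixes N m D :: real
  assumes D: "D > 0" and N: "N > 0" and c: "N \<le> 4 * m * (sqrt (1 + D) - 1) / D"
  shows "D / 4 \<le> (2 * m / N)\<^sup>2 - 2 * m / N"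
proof -
  define u where "u = 2 * m / N"
  define s where "s = sqrt (1 + D)"
  have s1: "s > 1" unfolding s_def using D by simp
  have s2: "s\<^sup>2 = 1 + D" unfolding s_def using D by simp
  have "N * D \<le> 4 * m * (s - 1)" using c D unfolding s_def by (simp add: le_divide_eq)
  also have "4 * m = 2 * N * u" unfolding u_def using N by simp
  finally have "N * D \<le> N * (2 * u * (s - 1))" by (simp add: algebra_simps)
  hence "D \<le> 2 * u * (s - 1)" using N by simp
  moreover have "D = (s - 1) * (s + 1)" using s2 by (simp add: algebra_simps power2_eq_square)
  ultimately have "(s - 1) * (s + 1) \<le> (s - 1) * (2 * u)" by (simp add: algebra_simps)
  hence "s + 1 \<le> 2 * u" using s1 by simp
  hence "s\<^sup>2 \<le> (2 * u - 1)\<^sup>2" using s1 by (intro power_mono) auto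
  hence "1 + D \<le> 4 * u\<^sup>2 - 4 * u + 1" using s2 by (simp add: power2_eq_square algebra_simps)
  thus ?thesis unfolding u_def[symmetric] by simp
qed

lemma cs_ident:
  fixes f :: "'a \<Rightarrow> real"
  assumes fin: "finite I" and ne: "card I > 0"
  shows "real (card I) * (\<Sum>i\<in>I. (f i)\<^sup>2) - (\<Sum>i\<in>I. f i)\<^sup>2
     = real (card I) * (\<Sum>i\<in>I. (f i - (\<Sum>j\<in>I. f j) / real (card I))\<^sup>2)"
proof -
  define N where "N = real (card I)"
  define s where "s = (\<Sum>j\<in>I. f j)"
  have N: "N > 0" unfolding N_def using ne by simp
  have "(\<Sum>i\<in>I. (f i - s / N)\<^sup>2) = (\<Sum>i\<in>I. (f i)\<^sup>2 - 2 * (s / N) * f i + (s / N)\<^sup>2)"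
    by (rule sum.cong) (auto simp: power2_eq_square algebra_simps)
  also have "\<dots> = (\<Sum>i\<in>I. (f i)\<^sup>2) - (\<Sum>i\<in>I. 2 * (s / N) * f i) + N * (s / N)\<^sup>2"
    by (simp add: sum.distrib sum_subtractf N_def)
  also have "(\<Sum>i\<in>I. 2 * (s / N) * f i) = 2 * (s / N) * s"
    unfolding s_def by (rule sum_distrib_left[symmetric])
  finally have "N * (\<Sum>i\<in>I. (f i - s / N)\<^sup>2) = N * (\<Sum>i\<in>I. (f i)\<^sup>2) - s\<^sup>2"
    using N by (simp add: field_simps power2_eq_square)
  thus ?thesis unfolding N_def s_def by simp
qed

lemma cs_le:
  fixes f :: "'a \<Rightarrow> real"
  assumes fin: "finite I"
  shows "(\<Sum>i\<in>I. f i)\<^sup>2 \<le> real (card I) * (\<Sum>i\<in>I. (f i)\<^sup>2)"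
proof (cases "card I > 0")
  case True
  have "0 \<le> real (card I) * (\<Sum>i\<in>I. (f i - (\<Sum>j\<in>I. f j) / real (card I))\<^sup>2)"
    by (intro mult_nonneg_nonneg sum_nonneg) auto
  thus ?thesis using cs_ident[OF fin True, of f] by simp
next
  case False
  hence "I = {}" using fin by simp
  thus ?thesis by simp
qed

lemma cs_eq:
  fixes f :: "'a \<Rightarrow> real"
  assumes fin: "finite I" and ne: "card I > 0"
    and eq: "(\<Sum>i\<in>I. f i)\<^sup>2 = real (card I) * (\<Sum>i\<in>I. (f i)\<^sup>2)"
  shows "\<forall>i\<in>I. f i = (\<Sum>j\<in>I. f j) / real (card I)"
proof -
  define c where "c = (\<Sum>j\<in>I. f j) / real (card I)"
  have "real (card I) * (\<Sum>i\<in>I. (f i - c)\<^sup>2) = 0"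
    using cs_ident[OF fin ne, of f] eq unfolding c_def by simp
  hence "(\<Sum>i\<in>I. (f i - c)\<^sup>2) = 0" using ne by simp
  hence z: "\<forall>i\<in>I. (f i - c)\<^sup>2 = 0"
    using fin by (subst sum_nonneg_eq_0_iff[symmetric]) auto
  have "f i = c" if "i \<in> I" for i
  proof -
    have "(f i - c)\<^sup>2 = 0" using z that by blast
    hence "f i - c = 0" by (rule power_eq_0_iff[THEN iffD1, THEN conjunct1])
    thus ?thesis by simp
  qed
  thus ?thesis unfolding c_def by blast
qed


lemma root_in_list:
  fixes l :: real
  assumes "poly (\<Prod>q\<leftarrow>es. [:- q, 1:]) l = 0"
  shows "l \<in> set es"
  using assms by (induction es) auto




theorem mainTheorem14:
  fixes n :: nat and E :: "nat \<Rightarrow> nat \<Rightarrow> bool" and es :: "real list"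
  assumes sym: "\<And>i j. E i j \<Longrightarrow> E j i"
    and irrefl: "\<And>i. \<not> E i i"
    and conn: "graph_connected n E"
    and nonreg: "\<not> regular_graph n E"
    and eig: "is_eigenvalue_list (signless_laplacian n E) es"
  defines "m \<equiv> real (num_edges n E)"
    and "D \<equiv> (real (max_degree n E) - real (min_degree n E))\<^sup>2"
  shows "(real n \<le> 4 * m * (sqrt (1 + D) - 1) / D \<longrightarrow>
           QE n E es < 2 * m / real n
             + sqrt ((real n - 1) * (2 * m + real n / 4 * D - (2 * m / real n)\<^sup>2)))
       \<and> (real n > 4 * m * (sqrt (1 + D) - 1) / D \<longrightarrow>
           QE n E es < sqrt (2 * m / real n + D / 4)
             + sqrt ((real n - 1) * (2 * m + (real n - 1) / 4 * D - 2 * m / real n)))"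
proof -
  define d where "d = degree n E"
  define a where "a = (\<lambda>i j. if i = j then real (d i) else if E i j then 1 else (0::real))"
  define Q where "Q = signless_laplacian n E"
  define u where "u = 2 * m / real n"
  define Dl where "Dl = max_degree n E"
  define dl where "dl = min_degree n E"
  define T where "T = 2 * m + real n / 4 * D"
  have Qc: "Q \<in> carrier_mat n n" by (simp add: Q_def signless_laplacian_def)
  have dQ: "dim_row Q = n" "dim_col Q = n" by (simp_all add: Q_def signless_laplacian_def)
  have Qij: "Q $$ (i,j) = a i j" if "i < n" "j < n" for i j
    using that by (simp add: Q_def signless_laplacian_def a_def d_def)
  have asym: "a i j = a j i" for i j using sym by (auto simp: a_def)
  have cp: "char_poly Q = (\<Prod>q\<leftarrow>es. [:- q, 1:])"
    using eig by (simp add: Q_def is_eigenvalue_list_def)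
  have len: "length es = n" by (rule spec_sums(1)[OF Qc cp])
  obtain i1 j1 where i1: "i1 < n" "j1 < n" "d i1 \<noteq> d j1"
    using nonreg by (auto simp: regular_graph_def d_def)
  have "i1 \<noteq> j1" using i1 by auto
  hence n2: "n \<ge> 2" using i1 by arith
  have npos: "real n > 0" using n2 by simp
  have dle: "d i \<le> Dl" if "i < n" for i
    unfolding Dl_def max_degree_def d_def using that by (intro Max_ge) auto
  have dge: "dl \<le> d i" if "i < n" for i
    unfolding dl_def min_degree_def d_def using that by (intro Min_le) auto
  have dlDl: "dl < Dl"
    using dle[OF i1(1)] dle[OF i1(2)] dge[OF i1(1)] dge[OF i1(2)] i1(3) by linarith
  have Ddef: "D = (real Dl - real dl)\<^sup>2" by (simp add: D_def Dl_def dl_def)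
  have D1: "D \<ge> 1"
  proof -
    have "real Dl - real dl \<ge> 1" using dlDl by linarith
    hence "1 \<le> (real Dl - real dl)\<^sup>2" by (metis abs_of_nonneg dual_order.trans one_le_power
        power2_abs zero_le_one)
    thus ?thesis using Ddef by simp
  qed
  have m0: "m \<ge> 0" by (simp add: m_def)
  have u0: "u \<ge> 0" using m0 npos by (simp add: u_def)
  have hs: "(\<Sum>i<n. real (d i)) = 2 * m"
  proof -
    have "real (\<Sum>i<n. d i) = real (2 * num_edges n E)"
      using handshake[where n=n and E=E, OF sym irrefl] by (simp add: d_def)
    thus ?thesis by (simp add: m_def)
  qed
  have nu: "real n * u = 2 * m" using npos by (simp add: u_def)
  have var: "(\<Sum>i<n. (real (d i) - u)\<^sup>2) \<le> real n * D / 4"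
  proof -
    define p where "p = real Dl" define q where "q = real dl"
    have pt: "(real (d i) - u)\<^sup>2 \<le> (p + q - 2 * u) * real (d i) + (u\<^sup>2 - p * q)" if "i < n" for i
    proof -
      have h: "(real (d i) - q) * (p - real (d i)) \<ge> 0"
        using dle[OF that] dge[OF that] by (simp add: p_def q_def)
      have e: "(p + q - 2 * u) * real (d i) + (u\<^sup>2 - p * q) - (real (d i) - u)\<^sup>2
          = (real (d i) - q) * (p - real (d i))" by (simp add: algebra_simps power2_eq_square)
      show ?thesis using h e by linarith
    qed
    have "(\<Sum>i<n. (real (d i) - u)\<^sup>2) \<le> (\<Sum>i<n. (p + q - 2 * u) * real (d i) + (u\<^sup>2 - p * q))"
      by (rule sum_mono) (use pt in auto)
    also have "\<dots> = (p + q - 2 * u) * (\<Sum>i<n. real (d i)) + real n * (u\<^sup>2 - p * q)"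
      by (simp add: sum.distrib sum_distrib_left)
    also have "\<dots> = real n * ((p + q) * u - u\<^sup>2 - p * q)"
      unfolding hs nu[symmetric] by (simp add: algebra_simps power2_eq_square)
    also have "\<dots> = real n * D / 4 - real n * (u - (p + q) / 2)\<^sup>2"
      by (simp add: Ddef p_def[symmetric] q_def[symmetric] algebra_simps power2_eq_square
          add_divide_distrib diff_divide_distrib)
    also have "\<dots> \<le> real n * D / 4" by simp
    finally show ?thesis .
  qed
  define B where "B = Q - u \<cdot>\<^sub>m 1\<^sub>m n"
  define b where "b = (\<lambda>i j. a i j - (if i = j then u else 0))"
  have Bc: "B \<in> carrier_mat n n" unfolding B_def using Qc by (auto simp: minus_carrier_mat)
  have Bij: "B $$ (i,j) = b i j" if "i < n" "j < n" for i j
    using that Qc by (simp add: B_def b_def Qij)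
  have bsym: "b i j = b j i" for i j by (simp add: b_def asym)
  define Sx where "Sx = (\<Sum>i<n. (es!i - u)\<^sup>2)"
  have Sx_tr: "Sx = tr (B * B)" unfolding Sx_def B_def by (rule spec_sums(2)[OF Qc cp, symmetric])
  have "tr (B * B) = (\<Sum>i<n. \<Sum>j<n. (B $$ (i,j))\<^sup>2)"
    by (rule tr_sym_sq[OF Bc]) (simp add: Bij bsym)
  also have "\<dots> = (\<Sum>i<n. (real (d i) - u)\<^sup>2 + real (d i))"
  proof (rule sum.cong)
    fix i assume i: "i \<in> {..<n}"
    have "(\<Sum>j<n. (B $$ (i,j))\<^sup>2) = (\<Sum>j<n. (if i = j then (real (d i) - u)\<^sup>2 else 0) + (if E i j then 1 else 0))"
      by (rule sum.cong) (use i in \<open>auto simp: Bij b_def a_def irrefl\<close>)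
    also have "\<dots> = (real (d i) - u)\<^sup>2 + real (d i)"
      using i by (simp add: sum.distrib sum_indicator_card[where n=n and E=E and i=i, folded d_def])
    finally show "(\<Sum>j<n. (B $$ (i,j))\<^sup>2) = (real (d i) - u)\<^sup>2 + real (d i)" .
  qed simp
  also have "\<dots> = (\<Sum>i<n. (real (d i) - u)\<^sup>2) + 2 * m" by (simp add: sum.distrib hs)
  finally have SxT: "Sx \<le> T" using var Sx_tr by (simp add: T_def)
  define x where "x = (\<lambda>i. es ! i - u)"
  have QEx: "QE n E es = (\<Sum>i<n. \<bar>x i\<bar>)"
  proof -
    have "QE n E es = sum_list (map (\<lambda>q. \<bar>q - u\<bar>) es)"
      by (simp add: QE_def u_def m_def)
    also have "\<dots> = (\<Sum>i = 0..<length es. \<bar>es ! i - u\<bar>)"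
      by (simp add: sum_list_sum_nth)
    finally show ?thesis by (simp add: len x_def atLeast0LessThan)
  qed
  have Sxx: "Sx = (\<Sum>i<n. (x i)\<^sup>2)" by (simp add: Sx_def x_def)
  obtain w where nw: "nsq n w = 1" and wmax: "\<And>y. qf n a y \<le> qf n a w * nsq n y"
    using rayleigh_exists[where n=n and a=a] n2 by auto
  define l where "l = qf n a w"
  have le: "qf n a y \<le> l * nsq n y" for y using wmax[of y] by (simp add: l_def mult.commute)
  have eigw: "(\<Sum>j<n. a k j * w j) = l * w k" if "k < n" for k
    by (rule lagrange[OF asym le _ that]) (simp add: nw l_def)
  have l_in: "l \<in> set es"
  proof -
    define v where "v = Matrix.vec n w"
    have "Q *\<^sub>v v = l \<cdot>\<^sub>v v"
    proof (rule eq_vecI)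
      fix k assume "k < dim_vec (l \<cdot>\<^sub>v v)"
      hence k: "k < n" by (simp add: v_def)
      have "vec_index (Q *\<^sub>v v) k = (\<Sum>j<n. a k j * w j)"
        using Qc k by (auto simp: scalar_prod_def v_def lessThan_atLeast0 Qij intro!: sum.cong)
      thus "vec_index (Q *\<^sub>v v) k = vec_index (l \<cdot>\<^sub>v v) k" using k eigw[OF k] by (simp add: v_def)
    qed (simp add: v_def dQ)
    moreover have "v \<noteq> 0\<^sub>v n"
    proof
      assume "v = 0\<^sub>v n"
      hence "\<forall>k<n. w k = 0" by (metis index_vec index_zero_vec(1) v_def)
      hence "nsq n w = 0" by (simp add: nsq_def)
      thus False using nw by simp
    qed
    moreover have "v \<in> carrier_vec n" by (simp add: v_def)
    ultimately have "eigenvalue Q l" using Qc unfolding eigenvalue_def eigenvector_def by auto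
    hence "poly (char_poly Q) l = 0" using eigenvalue_root_char_poly[OF Qc] by simp
    thus ?thesis using cp root_in_list by simp
  qed
  have rowsum: "(\<Sum>j<n. a k j) = 2 * real (d k)" if "k < n" for k
  proof -
    have "(\<Sum>j<n. a k j) = (\<Sum>j<n. (if k = j then real (d k) else 0) + (if E k j then 1 else 0))"
      by (rule sum.cong) (auto simp: a_def irrefl)
    also have "\<dots> = real (d k) + real (d k)"
      using that by (simp add: sum.distrib sum_indicator_card[where n=n and E=E and i=k, folded d_def])
    finally show ?thesis by simp
  qed
  define y1 where "y1 = (\<lambda>i::nat. 1::real)"
  have qf1: "qf n a y1 = 4 * m"
  proof -
    have "qf n a y1 = (\<Sum>i<n. \<Sum>j<n. a i j)" by (simp add: qf_def y1_def)
    also have "\<dots> = (\<Sum>i<n. 2 * real (d i))" by (rule sum.cong) (auto simp: rowsum)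
    also have "\<dots> = 4 * m" using hs by (simp add: sum_distrib_left[symmetric])
    finally show ?thesis .
  qed
  have ns1: "nsq n y1 = real n" by (simp add: nsq_def y1_def)
  have "4 * m \<le> l * real n" using le[of y1] qf1 ns1 by simp
  moreover have "4 * m \<noteq> l * real n"
  proof
    assume eq: "4 * m = l * real n"
    have "(\<Sum>j<n. a k j * y1 j) = l * y1 k" if "k < n" for k
      by (rule lagrange[OF asym le _ that]) (simp add: qf1 ns1 eq)
    hence "2 * real (d k) = l" if "k < n" for k using rowsum[OF that] that by (simp add: y1_def)
    hence "2 * real (d i1) = l" "2 * real (d j1) = l" using i1 by auto
    hence "real (d i1) = real (d j1)" by linarith
    thus False using i1 by simp
  qed
  ultimately have "4 * m < l * real n" by simp
  hence l2u: "l > 2 * u" using npos by (simp add: u_def pos_divide_less_eq mult.commute)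
  obtain i0 where i0: "i0 < n" "es ! i0 = l" using l_in len by (auto simp: in_set_conv_nth)
  define x0 where "x0 = x i0"
  have x0u: "x0 > u" using l2u i0 by (simp add: x0_def x_def)
  have x0S: "x0\<^sup>2 \<le> Sx"
    unfolding Sxx x0_def by (rule member_le_sum) (use i0 in auto)
  show ?thesis
  proof (intro conjI impI)
    assume c: "real n \<le> 4 * m * (sqrt (1 + D) - 1) / D"
    have "D / 4 \<le> u\<^sup>2 - u" using cond_i[OF _ npos c] D1 by (simp add: u_def)
    hence h: "u + D / 4 \<le> u\<^sup>2" by simp
    have "T = real n * (u + D / 4)" using nu by (simp add: T_def algebra_simps)
    also have "\<dots> \<le> real n * u\<^sup>2" by (rule mult_left_mono[OF h]) simp
    finally have Tu: "T \<le> real n * u\<^sup>2" .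
    define I where "I = {..<n} - {i0}"
    have cI: "card I = n - 1" using i0 by (simp add: I_def)
    have "QE n E es = \<bar>x i0\<bar> + (\<Sum>i\<in>I. \<bar>x i\<bar>)"
      unfolding QEx I_def using i0 by (simp add: sum.remove)
    also have "\<bar>x i0\<bar> = x0" using x0u u0 by (simp add: x0_def)
    finally have QE1: "QE n E es = x0 + (\<Sum>i\<in>I. \<bar>x i\<bar>)" .
    have "(\<Sum>i\<in>I. \<bar>x i\<bar>)\<^sup>2 \<le> real (card I) * (\<Sum>i\<in>I. \<bar>x i\<bar>\<^sup>2)"
      by (rule cs_le) (simp add: I_def)
    also have "(\<Sum>i\<in>I. \<bar>x i\<bar>\<^sup>2) = Sx - x0\<^sup>2"
      unfolding Sxx I_def x0_def using i0 by (simp add: sum.remove)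
    also have "real (card I) = real n - 1" using cI n2 by simp
    finally have "(\<Sum>i\<in>I. \<bar>x i\<bar>) \<le> sqrt ((real n - 1) * (Sx - x0\<^sup>2))" by (rule real_le_rsqrt)
    also have "\<dots> \<le> sqrt ((real n - 1) * (T - x0\<^sup>2))"
      using SxT n2 by (intro real_sqrt_le_mono mult_left_mono) auto
    finally have "QE n E es \<le> x0 + sqrt ((real n - 1) * (T - x0\<^sup>2))" using QE1 by simp
    also have "\<dots> < u + sqrt ((real n - 1) * (T - u\<^sup>2))"
      by (rule final_i) (use n2 u0 x0u x0S SxT Tu in auto)
    finally show "QE n E es < 2 * m / real n
             + sqrt ((real n - 1) * (2 * m + real n / 4 * D - (2 * m / real n)\<^sup>2))"
      by (simp add: u_def T_def)
  next
    have QEsq: "(QE n E es)\<^sup>2 < real n * Sx"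
    proof -
      have le2: "(QE n E es)\<^sup>2 \<le> real n * Sx"
        using cs_le[of "{..<n}" "\<lambda>i. \<bar>x i\<bar>"] by (simp add: QEx Sxx)
      moreover have "(QE n E es)\<^sup>2 \<noteq> real n * Sx"
      proof
        assume eq: "(QE n E es)\<^sup>2 = real n * Sx"
        define t where "t = QE n E es / real n"
        have eq': "(\<Sum>i\<in>{..<n}. \<bar>x i\<bar>)\<^sup>2 = real (card {..<n::nat}) * (\<Sum>i\<in>{..<n}. \<bar>x i\<bar>\<^sup>2)"
          using eq unfolding QEx Sxx by simp
        have ce: "\<forall>i\<in>{..<n}. \<bar>x i\<bar> = (\<Sum>j\<in>{..<n}. \<bar>x j\<bar>) / real (card {..<n::nat})"
          by (rule cs_eq[OF _ _ eq']) (use n2 in auto)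
        have xt: "(x i)\<^sup>2 = t\<^sup>2" if "i < n" for i
        proof -
          have h: "\<bar>x i\<bar> = (\<Sum>j\<in>{..<n}. \<bar>x j\<bar>) / real (card {..<n::nat})"
            using ce that by blast
          have "\<bar>x i\<bar> = t" unfolding t_def QEx using h by simp
          thus ?thesis by (metis power2_abs)
        qed
        define M where "M = B * B - t\<^sup>2 \<cdot>\<^sub>m 1\<^sub>m n"
        have Mc: "M \<in> carrier_mat n n" unfolding M_def using Bc by (auto simp: minus_carrier_mat)
        have BB: "(B * B) $$ (i,j) = (\<Sum>k<n. b i k * b k j)" if "i < n" "j < n" for i j
          using that Bc by (auto simp: scalar_prod_def Bij lessThan_atLeast0 intro!: sum.cong)
        have Mij: "M $$ (i,j) = (\<Sum>k<n. b i k * b k j) - (if i = j then t\<^sup>2 else 0)" if "i < n" "j < n" for i j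
          using that Bc BB by (simp add: M_def)
        have Msym: "M $$ (i,j) = M $$ (j,i)" if "i < n" "j < n" for i j
        proof -
          have "(\<Sum>k<n. b i k * b k j) = (\<Sum>k<n. b j k * b k i)"
            by (rule sum.cong) (simp_all add: bsym[of j] bsym[of _ i] mult.commute)
          thus ?thesis using that by (simp add: Mij)
        qed
        have "tr (M * M) = (\<Sum>i<n. ((es!i - u)\<^sup>2 - t\<^sup>2)\<^sup>2)"
          unfolding M_def B_def by (rule spec_sums(3)[OF Qc cp])
        also have "\<dots> = 0" using xt by (simp add: x_def)
        finally have "(\<Sum>i<n. \<Sum>j<n. (M $$ (i,j))\<^sup>2) = 0" using tr_sym_sq[OF Mc Msym] by simp
        hence "\<forall>i\<in>{..<n}. (\<Sum>j<n. (M $$ (i,j))\<^sup>2) = 0"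
          by (subst sum_nonneg_eq_0_iff[symmetric]) (auto intro: sum_nonneg)
        hence M0: "M $$ (i,j) = 0" if "i < n" "j < n" for i j
          using that by (auto simp: sum_nonneg_eq_0_iff)
        have tri: "E i j" if "i < n" "j < n" "k < n" "i \<noteq> j" "E i k" "E k j" for i j k
        proof (rule ccontr)
          assume nij: "\<not> E i j"
          have terms: "b i l * b l j = (if E i l \<and> E l j then 1 else 0)" for l
            using nij \<open>i \<noteq> j\<close> irrefl by (auto simp: b_def a_def)
          have "(\<Sum>l<n. b i l * b l j) = 0" using M0[OF that(1,2)] Mij[OF that(1,2)] that(4) by simp
          moreover have "b i k * b k j \<le> (\<Sum>l<n. b i l * b l j)"
            by (rule member_le_sum) (use that terms in auto)
          ultimately show False using terms[of k] that by simp
        qed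
        define R where "R = (\<lambda>x y. x < n \<and> y < n \<and> E x y)"
        have reach: "R\<^sup>*\<^sup>* i j \<Longrightarrow> i < n \<Longrightarrow> j = i \<or> E i j" for i j
        proof (induction rule: rtranclp_induct)
          case base thus ?case by simp
        next
          case (step y z)
          from step.hyps(2) have yz: "y < n" "z < n" "E y z" by (auto simp: R_def)
          from step.IH step.prems have "y = i \<or> E i y" by simp
          thus ?case
          proof
            assume "y = i" thus ?case using yz by simp
          next
            assume iy: "E i y"
            show ?case
            proof (cases "z = i")
              case False thus ?thesis using tri[of i z y] iy yz step.prems by auto
            qed simp
          qed
        qed
        have "degree n E i = n - 1" if "i < n" for i
        proof -
          have "{j. j < n \<and> E i j} = {..<n} - {i}"
          proof -
            have "(j < n \<and> E i j) \<longleftrightarrow> j \<in> {..<n} - {i}" for j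
            proof
              assume "j < n \<and> E i j" thus "j \<in> {..<n} - {i}" using irrefl by auto
            next
              assume j: "j \<in> {..<n} - {i}"
              hence "R\<^sup>*\<^sup>* i j" using conn that by (auto simp: graph_connected_def R_def)
              hence "j = i \<or> E i j" using reach that by blast
              thus "j < n \<and> E i j" using j by auto
            qed
            thus ?thesis by blast
          qed
          thus ?thesis using that by (simp add: degree_def)
        qed
        hence "regular_graph n E" by (simp add: regular_graph_def)
        thus False using nonreg by simp
      qed
      ultimately show ?thesis by simp
    qed
    have QE0: "QE n E es \<ge> 0" unfolding QEx by (simp add: sum_nonneg)
    have nT: "real n * T = (real n)\<^sup>2 * (u + D / 4)"
      using nu by (simp add: T_def power2_eq_square algebra_simps)
    have "QE n E es < sqrt (real n * T)"
      by (rule real_less_rsqrt) (use QEsq SxT npos in \<open>auto intro: order_less_le_trans\<close>)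
    also have "sqrt (real n * T) = real n * sqrt (u + D / 4)"
      unfolding nT using npos by (simp add: real_sqrt_mult)
    also have "\<dots> = sqrt (2 * m / real n + D / 4)
             + sqrt ((real n - 1) * (2 * m + (real n - 1) / 4 * D - 2 * m / real n))"
    proof -
      have e2: "2 * m / real n = u" by (simp add: u_def)
      have e1: "2 * m = real n * u" using nu by simp
      have "(real n - 1) * (2 * m + (real n - 1) / 4 * D - 2 * m / real n)
          = (real n - 1) * (real n * u + (real n - 1) / 4 * D - u)"
        unfolding e2 by (simp only: e1)
      also have "\<dots> = (real n - 1)\<^sup>2 * (u + D / 4)" by (simp add: power2_eq_square field_simps)
      finally have A: "(real n - 1) * (2 * m + (real n - 1) / 4 * D - 2 * m / real n) = (real n - 1)\<^sup>2 * (u + D / 4)" .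
      have "sqrt ((real n - 1) * (2 * m + (real n - 1) / 4 * D - 2 * m / real n)) = (real n - 1) * sqrt (u + D / 4)"
        unfolding A real_sqrt_mult using n2 by simp
      thus ?thesis unfolding e2 by (simp add: algebra_simps)
    qed
    finally show "QE n E es < sqrt (2 * m / real n + D / 4)
             + sqrt ((real n - 1) * (2 * m + (real n - 1) / 4 * D - 2 * m / real n))" .
  qed
qed

end
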